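(* Let $X$ be a Hausdorff complex topological vector space with $\dim X>1$, and let $\Gamma$ be an SOT-dense subset of $\mathcal{B}(X)$. Then there exists $\Gamma_1\subset\Gamma$ such that $\Gamma_1$ is SOT-dense in $\mathcal{B}(X)$ and $\Gamma_1$ is not strictly transitive.
   Context: $\mathcal{B}(X)$ denotes the space of continuous linear operators on $X$. A set $\Gamma\subset\mathcal{B}(X)$ is strictly transitive if for each pair of nonzero $x,y\in X$ there exist $\alpha\in\mathbb{C}$ and $T\in\Gamma$ with $\alpha Tx=y$. The strong operator topology (SOT) on $\mathcal{B}(X)$ is the topology in which $T$ has a neighborhood basis of sets $\{S\in\mathcal{B}(X): Se_i-Te_i\in U,\ i=1,\dots,k\}$, where $k\in\mathbb{N}$, $e_1,\dots,e_k\in X$ are linearly independent, and $U$ is a neighborhood of $0$ in $X$. *)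

theory Defs
  imports "HOL-Analysis.Analysis"
begin

definition complex_tvs :: "(complex \<Rightarrow> 'v::ab_group_add \<Rightarrow> 'v) \<Rightarrow> 'v topology \<Rightarrow> bool" where
  "complex_tvs smul T \<longleftrightarrow>
     vector_space smul \<and> topspace T = UNIV \<and>
     continuous_map (prod_topology T T) T (\<lambda>(x, y). x + y) \<and>
     continuous_map (prod_topology (euclidean :: complex topology) T) T (\<lambda>(c, x). smul c x)"

text \<open>dim X > 1: there are two distinct linearly independent vectors
(works also for infinite dimension).\<close>
definition dim_gt_one :: "(complex \<Rightarrow> 'v::ab_group_add \<Rightarrow> 'v) \<Rightarrow> bool" where
  "dim_gt_one smul \<longleftrightarrow> (\<exists>x y. x \<noteq> y \<and> \<not> module.dependent smul {x, y})"

definition bounded_ops :: "(complex \<Rightarrow> 'v::ab_group_add \<Rightarrow> 'v) \<Rightarrow> 'v topology \<Rightarrow> ('v \<Rightarrow> 'v) set" where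
  "bounded_ops smul T = {A. Vector_Spaces.linear smul smul A \<and> continuous_map T T A}"

definition sot_nbhd :: "(complex \<Rightarrow> 'v::ab_group_add \<Rightarrow> 'v) \<Rightarrow> 'v topology \<Rightarrow> ('v \<Rightarrow> 'v) \<Rightarrow> 'v set \<Rightarrow> 'v set \<Rightarrow> ('v \<Rightarrow> 'v) set" where
  "sot_nbhd smul T A E U = {S \<in> bounded_ops smul T. \<forall>e\<in>E. S e - A e \<in> U}"

definition sot_dense :: "(complex \<Rightarrow> 'v::ab_group_add \<Rightarrow> 'v) \<Rightarrow> 'v topology \<Rightarrow> ('v \<Rightarrow> 'v) set \<Rightarrow> bool" where
  "sot_dense smul T \<Gamma> \<longleftrightarrow> \<Gamma> \<subseteq> bounded_ops smul T \<and>
     (\<forall>A\<in>bounded_ops smul T. \<forall>E U. finite E \<and> \<not> module.dependent smul E \<and>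
        (\<exists>V. openin T V \<and> 0 \<in> V \<and> V \<subseteq> U) \<longrightarrow> sot_nbhd smul T A E U \<inter> \<Gamma> \<noteq> {})"

definition strictly_transitive :: "(complex \<Rightarrow> 'v::ab_group_add \<Rightarrow> 'v) \<Rightarrow> ('v \<Rightarrow> 'v) set \<Rightarrow> bool" where
  "strictly_transitive smul \<Gamma> \<longleftrightarrow>
     (\<forall>x y. x \<noteq> 0 \<and> y \<noteq> 0 \<longrightarrow> (\<exists>\<alpha> A. A \<in> \<Gamma> \<and> smul \<alpha> (A x) = y))"

end

theory Submission imports Defs begin

lemma tvs_facts:
  assumes "complex_tvs smul T"
  shows "vector_space smul" "topspace T = UNIV"
    "continuous_map (prod_topology T T) T (\<lambda>(x, y). x + y)"
    "continuous_map (prod_topology (euclidean :: complex topology) T) T (\<lambda>(c, x). smul c x)"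
  using assms unfolding complex_tvs_def by auto

lemma cont_smul_const:
  assumes "complex_tvs smul T"
  shows "continuous_map euclidean T (\<lambda>c. smul c y)"
proof -
  have "continuous_map euclidean (prod_topology euclidean T) (\<lambda>c::complex. (c, y))"
    using tvs_facts(2)[OF assms] by (intro continuous_map_pairedI continuous_map_id) auto
  from continuous_map_compose[OF this tvs_facts(4)[OF assms]] show ?thesis by (simp add: o_def)
qed

lemma cont_smul_vec:
  assumes "complex_tvs smul T"
  shows "continuous_map T T (\<lambda>v. smul c v)"
proof -
  have "continuous_map T (prod_topology euclidean T) (\<lambda>v. (c, v))"
    by (intro continuous_map_pairedI continuous_map_id) auto
  from continuous_map_compose[OF this tvs_facts(4)[OF assms]] show ?thesis by (simp add: o_def)
qed

lemma cont_add_fun: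
  assumes "complex_tvs smul T" "continuous_map T T f" "continuous_map T T g"
  shows "continuous_map T T (\<lambda>v. f v + g v)"
proof -
  have "continuous_map T (prod_topology T T) (\<lambda>v. (f v, g v))"
    using assms by (intro continuous_map_pairedI) auto
  from continuous_map_compose[OF this tvs_facts(3)[OF assms(1)]] show ?thesis by (simp add: o_def)
qed

lemma add_nbhd:
  assumes "complex_tvs smul T" "openin T W0" "0 \<in> W0"
  shows "\<exists>W1 W2. openin T W1 \<and> openin T W2 \<and> 0 \<in> W1 \<and> 0 \<in> W2 \<and> (\<forall>a\<in>W1. \<forall>b\<in>W2. a + b \<in> W0)"
proof -
  define P where "P = {p \<in> topspace (prod_topology T T). (\<lambda>(x, y). x + y) p \<in> W0}"
  have h1: "openin (prod_topology T T) P" unfolding P_def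
    by (rule openin_continuous_map_preimage[OF tvs_facts(3)[OF assms(1)] assms(2)])
  have h2: "(0,0) \<in> P"
    unfolding P_def using assms tvs_facts(2)[OF assms(1)] by auto
  obtain U V where UV: "openin T U" "openin T V" "0 \<in> U" "0 \<in> V" "U \<times> V \<subseteq> P"
    using openin_prod_topology_alt[THEN iffD1, OF h1, rule_format, OF h2] by blast
  have "\<forall>a\<in>U. \<forall>b\<in>V. a + b \<in> W0"
  proof (intro ballI)
    fix a b assume "a \<in> U" "b \<in> V"
    then have "(a, b) \<in> P" using UV(5) by blast
    then show "a + b \<in> W0" unfolding P_def by simp
  qed
  then show ?thesis using UV by blast
qed

lemma smul_nbhd:
  assumes "complex_tvs smul T" "openin T W0" "0 \<in> W0"
  shows "\<exists>N. openin T N \<and> 0 \<in> N \<and> (\<forall>n\<in>N. smul c n \<in> W0)"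
proof -
  interpret vector_space smul using tvs_facts(1)[OF assms(1)] .
  have "openin T {v \<in> topspace T. smul c v \<in> W0}"
    by (rule openin_continuous_map_preimage[OF cont_smul_vec[OF assms(1)] assms(2)])
  moreover have "0 \<in> {v \<in> topspace T. smul c v \<in> W0}"
    using assms tvs_facts[OF assms(1)] scale_zero_right by auto
  ultimately show ?thesis by blast
qed

lemma sum_small:
  assumes tvs: "complex_tvs smul T" and F: "finite F"
  shows "openin T W0 \<Longrightarrow> 0 \<in> W0 \<Longrightarrow> \<exists>W. openin T W \<and> 0 \<in> W \<and>
     (\<forall>w. (\<forall>e\<in>F. w e \<in> W) \<longrightarrow> (\<Sum>e\<in>F. smul (a e) (w e)) \<in> W0)"
  using F
proof (induction F arbitrary: W0 rule: finite_induct)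
  case empty
  then show ?case using tvs_facts(2)[OF tvs] openin_topspace[of T] by (intro exI[of _ UNIV]) auto
next
  case (insert e F)
  obtain W1 W2 where W: "openin T W1" "openin T W2" "0 \<in> W1" "0 \<in> W2" "\<forall>a\<in>W1. \<forall>b\<in>W2. a + b \<in> W0"
    using add_nbhd[OF tvs insert.prems] by blast
  obtain N where N: "openin T N" "0 \<in> N" "\<forall>n\<in>N. smul (a e) n \<in> W1"
    using smul_nbhd[OF tvs W(1) W(3)] by blast
  obtain W4 where W4: "openin T W4" "0 \<in> W4" "\<forall>w. (\<forall>e\<in>F. w e \<in> W4) \<longrightarrow> (\<Sum>e\<in>F. smul (a e) (w e)) \<in> W2"
    using insert.IH[OF W(2) W(4)] by blast
  show ?case
  proof (intro exI[of _ "N \<inter> W4"] conjI allI impI)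
    fix w assume "\<forall>e'\<in>insert e F. w e' \<in> N \<inter> W4"
    then show "(\<Sum>e'\<in>insert e F. smul (a e') (w e')) \<in> W0"
      using insert.hyps W N W4 by auto
  qed (use N W4 in auto)
qed

lemma small_scalar:
  assumes tvs: "complex_tvs smul T" and E: "finite E" and V: "openin T V" "0 \<in> V"
  shows "\<exists>\<epsilon>. \<epsilon> \<noteq> 0 \<and> (\<forall>e\<in>E. smul \<epsilon> e \<in> V)"
proof -
  interpret vector_space smul using tvs_facts(1)[OF tvs] .
  define Oc where "Oc = (\<Inter>e\<in>E. {c. smul c e \<in> V})"
  have "open {c. smul c e \<in> V}" for e
  proof -
    have "openin euclidean {c \<in> topspace euclidean. smul c e \<in> V}"
      by (rule openin_continuous_map_preimage[OF cont_smul_const[OF tvs] V(1)])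
    then show ?thesis by (simp only: open_openin topspace_euclidean UNIV_I simp_thms Collect_conj_eq Int_UNIV_left Collect_const)
  qed
  then have "open Oc" unfolding Oc_def using E by (intro open_INT) auto
  moreover have "0 \<in> Oc" unfolding Oc_def using V by auto
  ultimately obtain r where r: "r > 0" "ball 0 r \<subseteq> Oc"
    by (meson open_contains_ball)
  have "complex_of_real (r/2) \<in> ball 0 r" using r by (simp add: dist_norm)
  then have "\<forall>e\<in>E. smul (complex_of_real (r/2)) e \<in> V" using r(2) unfolding Oc_def by blast
  moreover have "complex_of_real (r/2) \<noteq> 0" using r by simp
  ultimately show ?thesis by blast
qed

lemma sep_line:
  assumes tvs: "complex_tvs smul T" and H: "Hausdorff_space T" and y: "y \<noteq> 0"
    and z: "\<forall>c. z \<noteq> smul c y"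
  shows "\<exists>N. openin T N \<and> z \<in> N \<and> (\<forall>c. smul c y \<notin> N)"
proof -
  interpret vector_space smul using tvs_facts(1)[OF tvs] .
  have top: "topspace T = UNIV" by (rule tvs_facts(2)[OF tvs])
  obtain W0 W1 where W: "openin T W0" "openin T W1" "0 \<in> W0" "y \<in> W1" "disjnt W0 W1"
    using H y top unfolding Hausdorff_space_def by (metis UNIV_I)
  define P where "P = {p \<in> topspace (prod_topology euclidean T). (\<lambda>(c, x). smul c x) p \<in> W0}"
  have h1: "openin (prod_topology euclidean T) P" unfolding P_def
    by (rule openin_continuous_map_preimage[OF tvs_facts(4)[OF tvs] W(1)])
  have h2: "(0, z) \<in> P" unfolding P_def using W top by auto
  obtain B N1 where BN: "openin euclidean B" "openin T N1" "0 \<in> B" "z \<in> N1" "B \<times> N1 \<subseteq> P"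
    using openin_prod_topology_alt[THEN iffD1, OF h1, rule_format, OF h2] by blast
  have "open B" using BN(1) by (simp only: open_openin)
  then obtain d where d: "d > 0" "ball 0 d \<subseteq> B" using BN(3) by (meson open_contains_ball)
  have far: "smul c y \<notin> N1" if c: "norm c > 2/d" for c
  proof
    assume cN: "smul c y \<in> N1"
    have c0: "c \<noteq> 0" using c d by auto
    have "norm (inverse c) < d"
    proof -
      have "norm (inverse c) = inverse (norm c)" by (simp add: norm_inverse)
      also have "\<dots> < inverse (2/d)" using c d by (intro less_imp_inverse_less) auto
      also have "\<dots> \<le> d" using d by simp
      finally show ?thesis .
    qed
    then have "inverse c \<in> B" using d by (auto simp: dist_norm)
    with cN BN(5) have "(inverse c, smul c y) \<in> P" by blast
    then have "smul (inverse c) (smul c y) \<in> W0" unfolding P_def by simp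
    then have "y \<in> W0" using c0 by simp
    with W show False by (auto simp: disjnt_def)
  qed
  define K where "K = (\<lambda>c. smul c y) ` cball 0 (2/d)"
  have "compactin T K" unfolding K_def
    by (rule image_compactin[OF _ cont_smul_const[OF tvs]]) simp
  moreover have "compactin T {z}" using top by simp
  moreover have "disjnt {z} K" using z unfolding K_def by (auto simp: disjnt_def)
  ultimately obtain U V where UV: "openin T U" "openin T V" "{z} \<subseteq> U" "K \<subseteq> V" "disjnt U V"
    using Hausdorff_space_compact_separation[OF H] by metis
  show ?thesis
  proof (intro exI[of _ "N1 \<inter> U"] conjI allI)
    fix c show "smul c y \<notin> N1 \<inter> U"
    proof (cases "norm c > 2/d")
      case True then show ?thesis using far by auto
    next
      case False
      then have "smul c y \<in> K" unfolding K_def by auto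
      then show ?thesis using UV by (auto simp: disjnt_def)
    qed
  qed (use UV BN in auto)
qed

theorem corollary3p13:
  fixes smul :: "complex \<Rightarrow> 'v::ab_group_add \<Rightarrow> 'v" and T :: "'v topology"
    and \<Gamma> :: "('v \<Rightarrow> 'v) set"
  assumes "complex_tvs smul T"
    and "Hausdorff_space T"
    and "dim_gt_one smul"
    and "sot_dense smul T \<Gamma>"
  shows "\<exists>\<Gamma>1. \<Gamma>1 \<subseteq> \<Gamma> \<and> sot_dense smul T \<Gamma>1 \<and> \<not> strictly_transitive smul \<Gamma>1"
proof -
  note tvs = assms(1)
  interpret vector_space smul using tvs_facts(1)[OF tvs] .
  have top: "topspace T = UNIV" by (rule tvs_facts(2)[OF tvs])
  obtain x y where xy: "x \<noteq> y" "\<not> dependent {x, y}"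
    using assms(3) unfolding dim_gt_one_def by blast
  have x0: "x \<noteq> 0" and y0: "y \<noteq> 0" using xy(2) dependent_zero by auto
  have noline: "smul e x \<noteq> smul c y" if "e \<noteq> 0" for e c
  proof
    assume h: "smul e x = smul c y"
    have xe: "x = smul (inverse e * c) y"
      using that arg_cong[OF h, of "smul (inverse e)"] by simp
    have "x \<in> span {y}" unfolding span_singleton using xe by blast
    moreover have "{x, y} - {x} = {y}" using xy(1) by auto
    ultimately have "x \<in> span ({x, y} - {x})" by simp
    then show False using xy(2) unfolding dependent_def by blast
  qed
  define \<Gamma>1 where "\<Gamma>1 = {A \<in> \<Gamma>. \<forall>c. A x \<noteq> smul c y}"
  have dense: "sot_dense smul T \<Gamma>" by (rule assms(4))
  have GB: "\<Gamma> \<subseteq> bounded_ops smul T" using dense unfolding sot_dense_def by (rule conjunct1)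
  have dense2: "\<forall>A\<in>bounded_ops smul T. \<forall>E U. finite E \<and> \<not> dependent E \<and>
        (\<exists>V. openin T V \<and> 0 \<in> V \<and> V \<subseteq> U) \<longrightarrow> sot_nbhd smul T A E U \<inter> \<Gamma> \<noteq> {}"
    using dense unfolding sot_dense_def by (rule conjunct2)
  have G1B: "\<Gamma>1 \<subseteq> bounded_ops smul T" using GB unfolding \<Gamma>1_def by auto
  have nst: "\<not> strictly_transitive smul \<Gamma>1"
    unfolding strictly_transitive_def
  proof
    assume "\<forall>x y. x \<noteq> 0 \<and> y \<noteq> 0 \<longrightarrow> (\<exists>\<alpha> A. A \<in> \<Gamma>1 \<and> smul \<alpha> (A x) = y)"
    then obtain \<alpha> A where A: "A \<in> \<Gamma>1" "smul \<alpha> (A x) = y" using x0 y0 by blast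
    have a0: "\<alpha> \<noteq> 0" using A(2) y0 by auto
    have "A x = smul (inverse \<alpha>) y" using a0 arg_cong[OF A(2), of "smul (inverse \<alpha>)"] by simp
    with A(1) show False unfolding \<Gamma>1_def by auto
  qed
  have "sot_dense smul T \<Gamma>1"
    unfolding sot_dense_def
  proof (intro conjI G1B ballI allI impI)
    fix A E U
    assume AB: "A \<in> bounded_ops smul T"
      and h: "finite E \<and> \<not> dependent E \<and> (\<exists>V. openin T V \<and> 0 \<in> V \<and> V \<subseteq> U)"
    then obtain V where E: "finite E" "\<not> dependent E" and V: "openin T V" "0 \<in> V" "V \<subseteq> U" by blast
    obtain V1 V2 where V12: "openin T V1" "openin T V2" "0 \<in> V1" "0 \<in> V2" "\<forall>a\<in>V1. \<forall>b\<in>V2. a + b \<in> V"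
      using add_nbhd[OF tvs V(1,2)] by blast
    define V3 where "V3 = V1 \<inter> V2"
    have V3: "openin T V3" "0 \<in> V3" "\<And>a b. a \<in> V3 \<Longrightarrow> b \<in> V3 \<Longrightarrow> a + b \<in> V"
      using V12 unfolding V3_def by auto
    obtain A' where A': "A' \<in> bounded_ops smul T" "\<forall>c. A' x \<noteq> smul c y" "\<forall>e\<in>E. A' e - A e \<in> V3"
    proof (cases "\<forall>c. A x \<noteq> smul c y")
      case True then show ?thesis using that[of A] AB V3 by auto
    next
      case False
      then obtain \<beta> where \<beta>: "A x = smul \<beta> y" by blast
      obtain \<epsilon> where \<epsilon>: "\<epsilon> \<noteq> 0" "\<forall>e\<in>E. smul \<epsilon> e \<in> V3"
        using small_scalar[OF tvs E(1) V3(1,2)] by blast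
      define A' where "A' = (\<lambda>v. A v + smul \<epsilon> v)"
      have linA: "Vector_Spaces.linear smul smul A" and cA: "continuous_map T T A"
        using AB unfolding bounded_ops_def by auto
      have "Vector_Spaces.linear smul smul A'"
        using linA unfolding Vector_Spaces.linear_iff A'_def by (auto simp: algebra_simps scale_left_commute)
      moreover have "continuous_map T T A'"
        unfolding A'_def by (rule cont_add_fun[OF tvs cA cont_smul_vec[OF tvs]])
      ultimately have "A' \<in> bounded_ops smul T" unfolding bounded_ops_def by auto
      moreover have "\<forall>c. A' x \<noteq> smul c y"
      proof
        fix c show "A' x \<noteq> smul c y"
        proof
          assume "A' x = smul c y"
          then have "smul \<epsilon> x = smul (c - \<beta>) y"
            unfolding A'_def \<beta> by (simp add: algebra_simps scale_left_diff_distrib eq_diff_eq)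
          with noline[OF \<epsilon>(1)] show False by blast
        qed
      qed
      moreover have "\<forall>e\<in>E. A' e - A e \<in> V3" using \<epsilon> unfolding A'_def by auto
      ultimately show ?thesis using that by blast
    qed
    obtain N where N: "openin T N" "A' x \<in> N" "\<forall>c. smul c y \<notin> N"
      using sep_line[OF tvs assms(2) y0 A'(2)] by blast
    define W0 where "W0 = {w. A' x + w \<in> N}"
    have c1: "continuous_map T T (\<lambda>w. A' x)" using top by simp
    have cc: "continuous_map T T (\<lambda>w. A' x + w)"
      using cont_add_fun[OF tvs c1 continuous_map_id[unfolded id_def]] .
    have "openin T {w \<in> topspace T. A' x + w \<in> N}"
      by (rule openin_continuous_map_preimage[OF cc N(1)])
    then have W0: "openin T W0" "0 \<in> W0" using N(2) top unfolding W0_def by auto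
    have key: "\<exists>S\<in>\<Gamma>. (\<forall>e\<in>E. S e - A' e \<in> V3) \<and> S x - A' x \<in> W0"
    proof (cases "x \<in> span E")
      case True
      then obtain u where u: "x = (\<Sum>v\<in>E. smul (u v) v)" using span_finite[OF E(1)] by auto
      obtain W where W: "openin T W" "0 \<in> W"
        "\<forall>w. (\<forall>e\<in>E. w e \<in> W) \<longrightarrow> (\<Sum>e\<in>E. smul (u e) (w e)) \<in> W0"
        using sum_small[OF tvs E(1) W0] by blast
      have "sot_nbhd smul T A' E (V3 \<inter> W) \<inter> \<Gamma> \<noteq> {}"
        using dense2 A'(1) E V3 W
        by (meson openin_Int subset_refl Int_iff)
      then obtain S where S: "S \<in> \<Gamma>" "S \<in> bounded_ops smul T" "\<forall>e\<in>E. S e - A' e \<in> V3 \<inter> W"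
        unfolding sot_nbhd_def by blast
      have linS: "module_hom smul smul S" and linA': "module_hom smul smul A'"
        using S(2) A'(1) unfolding bounded_ops_def module_hom_iff_linear by auto
      have "S x - A' x = (\<Sum>e\<in>E. smul (u e) (S e - A' e))"
        unfolding u module_hom.sum[OF linS] module_hom.sum[OF linA'] module_hom.scale[OF linS]
          module_hom.scale[OF linA'] by (simp add: sum_subtractf scale_right_diff_distrib)
      also have "\<dots> \<in> W0" using W(3) S(3) by auto
      finally show ?thesis using S by auto
    next
      case False
      then have ind: "\<not> dependent (insert x E)" using E(2) independent_insertI by blast
      have "sot_nbhd smul T A' (insert x E) (V3 \<inter> W0) \<inter> \<Gamma> \<noteq> {}"
        using dense2 A'(1) E(1) ind V3 W0
        by (meson openin_Int subset_refl Int_iff finite_insert)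
      then obtain S where S: "S \<in> \<Gamma>" "\<forall>e\<in>insert x E. S e - A' e \<in> V3 \<inter> W0"
        unfolding sot_nbhd_def by blast
      then show ?thesis by auto
    qed
    then obtain S where S: "S \<in> \<Gamma>" "\<forall>e\<in>E. S e - A' e \<in> V3" "S x - A' x \<in> W0" by blast
    have SB: "S \<in> bounded_ops smul T" using S(1) GB by blast
    have "A' x + (S x - A' x) \<in> N" using S(3) unfolding W0_def by (rule CollectD)
    then have SN: "S x \<in> N" by (metis add.commute diff_add_cancel)
    have "\<forall>c. S x \<noteq> smul c y"
    proof
      fix c show "S x \<noteq> smul c y" using SN N(3)[rule_format, of c] by auto
    qed
    then have "S \<in> \<Gamma>1" using S(1) unfolding \<Gamma>1_def by blast
    moreover have "\<forall>e\<in>E. S e - A e \<in> U"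
    proof
      fix e assume e: "e \<in> E"
      have "S e - A e = (S e - A' e) + (A' e - A e)" by simp
      also have "\<dots> \<in> V" using V3(3) S(2) A'(3) e by blast
      finally show "S e - A e \<in> U" using V(3) by blast
    qed
    ultimately show "sot_nbhd smul T A E U \<inter> \<Gamma>1 \<noteq> {}"
      unfolding sot_nbhd_def using SB by blast
  qed
  moreover have "\<Gamma>1 \<subseteq> \<Gamma>" unfolding \<Gamma>1_def by auto
  ultimately show ?thesis using nst by blast
qed

end
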